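(* Let $A=M_{12}$ acting primitively on $12$ points, and for $r\geq 1$ let $G=A\wr C_r$, where $C_r$ is a cyclic group of order $r$ acting regularly on $r$ coordinates, with $G$ acting in product action on $n=12^r$ points. Then for all sufficiently large $r$, $k(G)>n^{1.08}$.
   Context: $k(X)$ denotes the number of conjugacy classes of a finite group $X$. Product action: $A\wr C_r=A^r\rtimes C_r$ acts on $\Delta^r$ ($|\Delta|=12$), with $A^r$ acting coordinatewise and $C_r$ permuting coordinates. *)

theory Defs
  imports Complex_Main
begin

definition perm12 :: "nat list \<Rightarrow> nat \<Rightarrow> nat" where
  "perm12 p = (\<lambda>x. if x < 12 then p ! x else x)"

text \<open>GAP generators of MathieuGroup(12), shifted to points 0..11:
  (1,...,11), (3,7,11,8)(4,10,5,6), (1,12)(2,11)(3,6)(4,8)(5,9)(7,10).\<close>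

definition m12_gen1 :: "nat \<Rightarrow> nat" where
  "m12_gen1 = perm12 [1,2,3,4,5,6,7,8,9,10,0,11]"

definition m12_gen2 :: "nat \<Rightarrow> nat" where
  "m12_gen2 = perm12 [0,1,6,9,5,3,10,2,8,4,7,11]"

definition m12_gen3 :: "nat \<Rightarrow> nat" where
  "m12_gen3 = perm12 [11,10,5,7,8,2,9,3,4,6,1,0]"

inductive_set M12 :: "(nat \<Rightarrow> nat) set" where
  M12_id: "id \<in> M12"
| M12_g1: "f \<in> M12 \<Longrightarrow> m12_gen1 \<circ> f \<in> M12"
| M12_g2: "f \<in> M12 \<Longrightarrow> m12_gen2 \<circ> f \<in> M12"
| M12_g3: "f \<in> M12 \<Longrightarrow> m12_gen3 \<circ> f \<in> M12"

text \<open>The product domain Delta^r, Delta = {0..<12}: tuples indexed by {0..<r},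
  padded with 0 outside.\<close>

definition prod_dom :: "nat \<Rightarrow> (nat \<Rightarrow> nat) set" where
  "prod_dom r = {x. (\<forall>i<r. x i < 12) \<and> (\<forall>i\<ge>r. x i = 0)}"

text \<open>The element of A wr C_r given by (a_0,...,a_{r-1}) in A^r and the shift by s in C_r,
  acting on Delta^r in product action (identity outside Delta^r).\<close>

definition wr_elem :: "nat \<Rightarrow> (nat \<Rightarrow> nat \<Rightarrow> nat) \<Rightarrow> nat \<Rightarrow> (nat \<Rightarrow> nat) \<Rightarrow> (nat \<Rightarrow> nat)" where
  "wr_elem r a s = (\<lambda>x. if x \<in> prod_dom r
      then (\<lambda>i. if i < r then a i (x ((i + s) mod r)) else 0) else x)"

definition M12_wr :: "nat \<Rightarrow> ((nat \<Rightarrow> nat) \<Rightarrow> (nat \<Rightarrow> nat)) set" where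
  "M12_wr r = {wr_elem r a s | a s. s < r \<and> (\<forall>i<r. a i \<in> M12)}"

text \<open>k(G) for a group G of permutations (under composition): number of conjugacy classes.
  h is conjugate to x iff h = g x g^-1 for some g in G, i.e. h o g = g o x.\<close>

definition num_conj_classes :: "('a \<Rightarrow> 'a) set \<Rightarrow> nat" where
  "num_conj_classes G = card ((\<lambda>x. {h \<in> G. \<exists>g\<in>G. h \<circ> g = g \<circ> x}) ` G)"

end

theory Submission
  imports Defs
begin


definition hexlist :: "nat list list" where
  "hexlist = [[0,1,2,3,4,6], [0,1,2,3,5,10], [0,1,2,3,7,8], [0,1,2,3,9,11], [0,1,2,4,5,8], [0,1,2,4,7,11], [0,1,2,4,9,10], [0,1,2,5,6,11], [0,1,2,5,7,9], [0,1,2,6,7,10], [0,1,2,6,8,9], [0,1,2,8,10,11], [0,1,3,4,5,9], [0,1,3,4,7,10], [0,1,3,4,8,11], [0,1,3,5,6,8], [0,1,3,5,7,11], [0,1,3,6,7,9], [0,1,3,6,10,11], [0,1,3,8,9,10], [0,1,4,5,6,7], [0,1,4,5,10,11], [0,1,4,6,8,10], [0,1,4,6,9,11], [0,1,4,7,8,9], [0,1,5,6,9,10], [0,1,5,7,8,10], [0,1,5,8,9,11], [0,1,6,7,8,11], [0,1,7,9,10,11], [0,2,3,4,5,11], [0,2,3,4,7,9], [0,2,3,4,8,10], [0,2,3,5,6,7], [0,2,3,5,8,9], [0,2,3,6,8,11], [0,2,3,6,9,10], [0,2,3,7,10,11], [0,2,4,5,6,9], [0,2,4,5,7,10], [0,2,4,6,7,8],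 [0,2,4,6,10,11], [0,2,4,8,9,11], [0,2,5,6,8,10], [0,2,5,7,8,11], [0,2,5,9,10,11], [0,2,6,7,9,11], [0,2,7,8,9,10], [0,3,4,5,6,10], [0,3,4,5,7,8], [0,3,4,6,7,11], [0,3,4,6,8,9], [0,3,4,9,10,11], [0,3,5,6,9,11], [0,3,5,7,9,10], [0,3,5,8,10,11], [0,3,6,7,8,10], [0,3,7,8,9,11], [0,4,5,6,8,11], [0,4,5,7,9,11], [0,4,5,8,9,10], [0,4,6,7,9,10], [0,4,7,8,10,11], [0,5,6,7,8,9], [0,5,6,7,10,11], [0,6,8,9,10,11], [1,2,3,4,5,7], [1,2,3,4,8,9], [1,2,3,4,10,11], [1,2,3,5,6,9], [1,2,3,5,8,11], [1,2,3,6,7,11], [1,2,3,6,8,10], [1,2,3,7,9,10], [1,2,4,5,6,10], [1,2,4,5,9,11], [1,2,4,6,7,9], [1,2,4,6,8,11], [1,2,4,7,8,10], [1,2,5,6,7,8], [1,2,5,7,10,11], [1,2,5,8,9,10], [1,2,6,9,10,11], [1,2,7,8,9,11], [1,3,4,5,6,11], [1,3,4,5,8,10], [1,3,4,6,7,8], [1,3,4,6,9,10], [1,3,4,7,9,11], [1,3,5,6,7,10], [1,3,5,7,8,9], [1,3,5,9,10,11], [1,3,6,8,9,11], [1,3,7,8,10,11], [1,4,5,6,8,9], [1,4,5,7,8,11], [1,4,5,7,9,10], [1,4,6,7,10,11], [1,4,8,9,10,11], [1,5,6,7,9,11], [1,5,6,8,10,11], [1,6,7,8,9,10], [2,3,4,5,6,8],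 [2,3,4,5,9,10], [2,3,4,6,7,10], [2,3,4,6,9,11], [2,3,4,7,8,11], [2,3,5,6,10,11], [2,3,5,7,8,10], [2,3,5,7,9,11], [2,3,6,7,8,9], [2,3,8,9,10,11], [2,4,5,6,7,11], [2,4,5,7,8,9], [2,4,5,8,10,11], [2,4,6,8,9,10], [2,4,7,9,10,11], [2,5,6,7,9,10], [2,5,6,8,9,11], [2,6,7,8,10,11], [3,4,5,6,7,9], [3,4,5,7,10,11], [3,4,5,8,9,11], [3,4,6,8,10,11], [3,4,7,8,9,10], [3,5,6,7,8,11], [3,5,6,8,9,10], [3,6,7,9,10,11], [4,5,6,7,8,10], [4,5,6,9,10,11], [4,6,7,8,9,11], [5,7,8,9,10,11]]"

definition Bset :: "nat set set" where "Bset = set (map set hexlist)"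

lemma g1_hex: "\<forall>h\<in>set hexlist. sort (map m12_gen1 h) \<in> set hexlist"
  by code_simp
lemma g2_hex: "\<forall>h\<in>set hexlist. sort (map m12_gen2 h) \<in> set hexlist"
  by code_simp
lemma g3_hex: "\<forall>h\<in>set hexlist. sort (map m12_gen3 h) \<in> set hexlist"
  by code_simp

definition good :: "(nat \<Rightarrow> nat) \<Rightarrow> bool" where
  "good f \<longleftrightarrow> bij f \<and> (\<forall>x\<ge>12. f x = x) \<and> (\<lambda>H. f ` H) ` Bset = Bset"

lemma good_id: "good id"
  unfolding good_def by simp

lemma good_comp: "good f \<Longrightarrow> good g \<Longrightarrow> good (f \<circ> g)"
proof -
  assume f: "good f" and g: "good g"
  have e: "(\<lambda>H. (f \<circ> g) ` H) = (\<lambda>H. f ` H) \<circ> (\<lambda>H. g ` H)"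
    by (auto simp: fun_eq_iff image_comp)
  have "(\<lambda>H. (f \<circ> g) ` H) ` Bset = (\<lambda>H. f ` H) ` ((\<lambda>H. g ` H) ` Bset)"
    unfolding e image_comp ..
  with f g show ?thesis unfolding good_def by (auto simp: bij_comp)
qed

lemma finite_Bset: "finite Bset" unfolding Bset_def by simp

lemma gen_good:
  assumes inv1: "g \<circ> g' = id" and inv2: "g' \<circ> g = id" and fx: "\<forall>x\<ge>12. g x = x"
    and hx: "\<forall>h\<in>set hexlist. sort (map g h) \<in> set hexlist"
  shows "good g"
proof -
  have b: "bij g" using inv1 inv2 o_bij by blast
  have sub: "(\<lambda>H. g ` H) ` Bset \<subseteq> Bset"
  proof
    fix K assume "K \<in> (\<lambda>H. g ` H) ` Bset"
    then obtain h where h: "h \<in> set hexlist" "K = g ` set h" unfolding Bset_def by auto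
    then have "K = set (sort (map g h))" by simp
    moreover have "sort (map g h) \<in> set hexlist" using hx h by blast
    then have "set (sort (map g h)) \<in> set ` set hexlist" by (rule imageI)
    ultimately show "K \<in> Bset" unfolding Bset_def by simp
  qed
  have "inj_on (\<lambda>H. g ` H) Bset"
    using b by (simp add: bij_def inj_on_def inj_image_eq_iff)
  then have "(\<lambda>H. g ` H) ` Bset = Bset" using endo_inj_surj[OF finite_Bset sub] by blast
  with b fx show ?thesis unfolding good_def by blast
qed

lemma perm12_inv:
  assumes "list_all (\<lambda>x. q!x < 12 \<and> p!(q!x) = x) [0..<12]"
  shows "perm12 p \<circ> perm12 q = id"
proof
  fix x show "(perm12 p \<circ> perm12 q) x = id x"
  proof (cases "x < 12")
    case True then show ?thesis using assms by (auto simp: perm12_def list_all_iff)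
  next
    case False then show ?thesis by (simp add: perm12_def)
  qed
qed

lemma perm12_fix: "\<forall>x\<ge>12. perm12 p x = x" by (simp add: perm12_def)

definition m12_inv1 :: "nat \<Rightarrow> nat" where "m12_inv1 = perm12 [10, 0, 1, 2, 3, 4, 5, 6, 7, 8, 9, 11]"
definition m12_inv2 :: "nat \<Rightarrow> nat" where "m12_inv2 = perm12 [0, 1, 7, 5, 9, 4, 2, 10, 8, 3, 6, 11]"

lemma good_g1: "good m12_gen1"
  apply (rule gen_good[where g'=m12_inv1])
  unfolding m12_gen1_def m12_inv1_def
  apply (rule perm12_inv; code_simp)
  apply (rule perm12_inv; code_simp)
  apply (rule perm12_fix)
  using g1_hex unfolding m12_gen1_def .

lemma good_g2: "good m12_gen2"
  apply (rule gen_good[where g'=m12_inv2])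
  unfolding m12_gen2_def m12_inv2_def
  apply (rule perm12_inv; code_simp)
  apply (rule perm12_inv; code_simp)
  apply (rule perm12_fix)
  using g2_hex unfolding m12_gen2_def .

lemma good_g3: "good m12_gen3"
  apply (rule gen_good[where g'=m12_gen3])
  unfolding m12_gen3_def
  apply (rule perm12_inv; code_simp)
  apply (rule perm12_inv; code_simp)
  apply (rule perm12_fix)
  using g3_hex unfolding m12_gen3_def .

lemma M12_good: "f \<in> M12 \<Longrightarrow> good f"
proof (induction rule: M12.induct)
  case M12_id show ?case by (rule good_id)
next
  case (M12_g1 f) show ?case by (rule good_comp[OF good_g1 M12_g1.IH])
next
  case (M12_g2 f) show ?case by (rule good_comp[OF good_g2 M12_g2.IH])
next
  case (M12_g3 f) show ?case by (rule good_comp[OF good_g3 M12_g3.IH])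
qed



lemma good_bij: "good g \<Longrightarrow> bij g" by (simp add: good_def)
lemma good_inj: "good g \<Longrightarrow> g x = g y \<longleftrightarrow> x = y"
  using good_bij bij_def inj_eq by metis
lemma good_fix: "good g \<Longrightarrow> x \<ge> 12 \<Longrightarrow> g x = x" by (simp add: good_def)

lemma good_lt: assumes "good g" "z < 12" shows "g z < 12"
proof (rule ccontr)
  assume "\<not> g z < 12"
  then have "g (g z) = g z" using good_fix[OF assms(1)] by simp
  then have "g z = z" using good_inj[OF assms(1)] by blast
  with \<open>\<not> g z < 12\<close> assms(2) show False by simp
qed

lemma good_onto: assumes "good g" "y < 12" shows "\<exists>z<12. g z = y"
proof -
  obtain z where z: "g z = y" using good_bij[OF assms(1)] by (metis bij_pointE)
  have "z < 12"
  proof (rule ccontr)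
    assume "\<not> z < 12" then have "g z = z" using good_fix[OF assms(1)] by simp
    with z assms(2) \<open>\<not> z < 12\<close> show False by simp
  qed
  with z show ?thesis by blast
qed

lemma good_B: assumes "good g" shows "g ` H \<in> Bset \<longleftrightarrow> H \<in> Bset"
proof
  assume "H \<in> Bset" then show "g ` H \<in> Bset" using assms unfolding good_def by blast
next
  assume "g ` H \<in> Bset"
  then have "g ` H \<in> (\<lambda>H. g ` H) ` Bset" using assms unfolding good_def by simp
  then obtain H' where "H' \<in> Bset" "g ` H = g ` H'" by blast
  moreover have "inj g" using good_bij[OF assms] bij_def by blast
  ultimately show "H \<in> Bset" by (simp add: inj_image_eq_iff)
qed

lemma count_inv:
  assumes g: "good g" and PQ: "\<And>z. P (g z) \<longleftrightarrow> Q z"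
  shows "card {z. z < (12::nat) \<and> P z} = card {z. z < 12 \<and> Q z}"
proof -
  have e: "{z. z < 12 \<and> P z} = g ` {z. z < 12 \<and> Q z}"
  proof
    show "{z. z < 12 \<and> P z} \<subseteq> g ` {z. z < 12 \<and> Q z}"
    proof
      fix y assume y: "y \<in> {z. z < 12 \<and> P z}"
      then have "y < 12" by simp
      then obtain z where z: "z < 12" "g z = y" using good_onto[OF g] by blast
      have "P (g z)" using y z(2) by simp
      then have "Q z" using PQ by blast
      with z show "y \<in> g ` {z. z < 12 \<and> Q z}" by blast
    qed
    show "g ` {z. z < 12 \<and> Q z} \<subseteq> {z. z < 12 \<and> P z}"
    proof
      fix y assume "y \<in> g ` {z. z < 12 \<and> Q z}"
      then obtain z where z: "z < 12" "Q z" "y = g z" by blast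
      have "g z < 12" using good_lt[OF g z(1)] .
      moreover have "P (g z)" using PQ z(2) by blast
      ultimately show "y \<in> {z. z < 12 \<and> P z}" using z(3) by simp
    qed
  qed
  have "inj g" using good_bij[OF g] by (rule bij_is_inj)
  then have i: "inj_on g {z. z < 12 \<and> Q z}" by (rule inj_on_subset) simp
  show ?thesis unfolding e using card_image[OF i] .
qed

lemma conj_pow: "h \<circ> g = g \<circ> x \<Longrightarrow> (h ^^ k) \<circ> g = g \<circ> (x ^^ k)"
proof (induction k)
  case 0 then show ?case by simp
next
  case (Suc k)
  have "(h ^^ Suc k) \<circ> g = h \<circ> ((h ^^ k) \<circ> g)" by (simp add: comp_assoc)
  also have "\<dots> = (h \<circ> g) \<circ> (x ^^ k)" unfolding Suc.IH[OF Suc.prems] by (simp only: comp_assoc)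
  also have "\<dots> = g \<circ> (x ^^ Suc k)" unfolding Suc.prems funpow.simps(2) by (simp only: comp_assoc)
  finally show ?case .
qed

definition hexS :: "nat set" where "hexS = {0,1,2,3,4,6}"

definition fixc :: "(nat \<Rightarrow> nat) \<Rightarrow> nat \<Rightarrow> nat" where
  "fixc x k = card {z. z < 12 \<and> (x ^^ k) z = z}"
definition hexc :: "(nat \<Rightarrow> nat) \<Rightarrow> nat" where
  "hexc x = card {z. z < 12 \<and> (\<lambda>s. (x ^^ s) z) ` hexS \<in> Bset}"
definition Jinv :: "(nat \<Rightarrow> nat) \<Rightarrow> nat list \<times> nat" where
  "Jinv x = (map (fixc x) [1..<12], hexc x)"

lemma Jinv_conj:
  assumes g: "good g" and c: "h \<circ> g = g \<circ> x"
  shows "Jinv h = Jinv x"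
proof -
  have p: "(h ^^ k) (g z) = g ((x ^^ k) z)" for k z
    using conj_pow[OF c, of k] by (metis comp_apply)
  have "fixc h k = fixc x k" for k
    unfolding fixc_def
    by (rule count_inv[OF g]) (simp add: p good_inj[OF g])
  moreover have "hexc h = hexc x"
    unfolding hexc_def
  proof (rule count_inv[OF g])
    fix z
    have "(\<lambda>s. (h ^^ s) (g z)) ` hexS = g ` ((\<lambda>s. (x ^^ s) z) ` hexS)"
      by (simp add: p image_image)
    then show "(\<lambda>s. (h ^^ s) (g z)) ` hexS \<in> Bset \<longleftrightarrow> (\<lambda>s. (x ^^ s) z) ` hexS \<in> Bset"
      using good_B[OF g] by simp
  qed
  ultimately show ?thesis unfolding Jinv_def by simp
qed



lemma card_filter12: "card {z. z < (n::nat) \<and> P z} = length (filter P [0..<n])"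
proof -
  have "{i. i < n \<and> P ([0..<n] ! i)} = {z. z < n \<and> P z}" by auto
  then show ?thesis by (simp add: length_filter_conv_card)
qed

lemma hex_sorted: "\<forall>h\<in>set hexlist. sorted h \<and> distinct h" by code_simp

lemma hex_mem: "set L \<in> set (map set hexlist) \<longleftrightarrow> sort (remdups L) \<in> set hexlist"
proof
  assume "set L \<in> set (map set hexlist)"
  then obtain h where h: "h \<in> set hexlist" "set L = set h" by auto
  have "sort (remdups L) = h"
    by (rule sorted_distinct_set_unique) (use h hex_sorted in auto)
  with h show "sort (remdups L) \<in> set hexlist" by simp
next
  assume "sort (remdups L) \<in> set hexlist"
  then have "set (sort (remdups L)) \<in> set ` set hexlist" by (rule imageI)
  then show "set L \<in> set (map set hexlist)" by simp
qed

primrec lpow :: "nat list \<Rightarrow> nat \<Rightarrow> nat list" where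
  "lpow p 0 = [0..<12]"
| "lpow p (Suc k) = map ((!) p) (lpow p k)"
definition fixcnt :: "nat list \<Rightarrow> nat" where
  "fixcnt l = length (filter (case_prod (=)) (zip l [0..<12]))"
definition inhex :: "nat list \<Rightarrow> bool" where "inhex r \<longleftrightarrow> r \<in> set hexlist"
definition hexcnt :: "nat list \<Rightarrow> nat" where
  "hexcnt p = length (filter inhex (map (sort \<circ> remdups)
      (transpose [lpow p 0, lpow p 1, lpow p 2, lpow p 3, lpow p 4, lpow p 6])))"
definition Jl :: "nat list \<Rightarrow> nat list \<times> nat" where
  "Jl p = ([fixcnt (lpow p 1), fixcnt (lpow p 2), fixcnt (lpow p 3), fixcnt (lpow p 4),
     fixcnt (lpow p 5), fixcnt (lpow p 6), fixcnt (lpow p 7), fixcnt (lpow p 8),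
     fixcnt (lpow p 9), fixcnt (lpow p 10), fixcnt (lpow p 11)], hexcnt p)"

definition valid :: "nat list \<Rightarrow> bool" where
  "valid q \<longleftrightarrow> length q = 12 \<and> set q \<subseteq> {..<12}"

lemma perm12_comp: "valid q \<Longrightarrow> perm12 p \<circ> perm12 q = perm12 (map ((!) p) q)"
proof
  fix x assume q: "valid q"
  show "(perm12 p \<circ> perm12 q) x = perm12 (map ((!) p) q) x"
  proof (cases "x < 12")
    case True
    then have "q ! x < 12" using q unfolding valid_def by (metis lessThan_iff nth_mem subsetD)
    then show ?thesis using True q by (simp add: perm12_def valid_def)
  next
    case False then show ?thesis by (simp add: perm12_def)
  qed
qed

lemma lpow_valid: "valid p \<Longrightarrow> valid (lpow p k)"
proof (induction k)
  case 0 then show ?case by (auto simp: valid_def)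
next
  case (Suc k)
  then have v: "valid (lpow p k)" by simp
  have "p ! i < 12" if "i < 12" for i
    using Suc.prems that unfolding valid_def by (metis lessThan_iff nth_mem subsetD)
  then show ?case using v unfolding valid_def by auto
qed

lemma pow_perm12: "valid p \<Longrightarrow> perm12 p ^^ k = perm12 (lpow p k)"
proof (induction k)
  case 0 then show ?case by (auto simp: perm12_def fun_eq_iff)
next
  case (Suc k)
  have "perm12 p ^^ Suc k = perm12 p \<circ> perm12 (lpow p k)" using Suc by simp
  also have "\<dots> = perm12 (lpow p (Suc k))" using perm12_comp[OF lpow_valid[OF Suc.prems]] by simp
  finally show ?case .
qed

lemma fixcnt_card: assumes "valid l" shows "card {z. z < 12 \<and> perm12 l z = z} = fixcnt l"
proof -
  have len: "length l = 12" using assms by (simp add: valid_def)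
  have "fixcnt l = card {i. i < 12 \<and> l ! i = i}"
    unfolding fixcnt_def length_filter_conv_card using len
    by (intro arg_cong[where f=card] Collect_cong) (auto simp: nth_zip)
  also have "{i. i < 12 \<and> l ! i = i} = {z. z < 12 \<and> perm12 l z = z}"
    by (auto simp: perm12_def)
  finally show ?thesis by simp
qed

lemma hexcnt_card: assumes p: "valid p"
  shows "card {z. z < 12 \<and> (\<lambda>s. (perm12 p ^^ s) z) ` hexS \<in> Bset} = hexcnt p"
proof -
  define Ls where "Ls = [lpow p 0, lpow p 1, lpow p 2, lpow p 3, lpow p 4, lpow p 6]"
  have lenLs: "\<forall>L\<in>set Ls. length L = 12" unfolding Ls_def using lpow_valid[OF p] by (simp add: valid_def)
  have ne: "Ls \<noteq> []" unfolding Ls_def by simp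
  have lt: "length (transpose Ls) = 12"
  proof -
    have "foldr (\<lambda>xs. max (length xs)) Ls 0 = 12" unfolding Ls_def
      using lpow_valid[OF p] by (simp add: valid_def)
    then show ?thesis by (simp add: length_transpose)
  qed
  have tz: "transpose Ls ! z = map (\<lambda>L. L ! z) Ls" if "z < 12" for z
  proof -
    have "transpose Ls ! z = map (\<lambda>xs. xs ! z) (filter (\<lambda>ys. z < length ys) Ls)"
      using nth_transpose[of z Ls] lt that by simp
    also have "filter (\<lambda>ys. z < length ys) Ls = Ls" using lenLs that by (simp add: filter_id_conv)
    finally show ?thesis .
  qed
  have "hexcnt p = card {i. i < 12 \<and> inhex (sort (remdups (transpose Ls ! i)))}"
    unfolding hexcnt_def Ls_def[symmetric] length_filter_conv_card using lt
    by (intro arg_cong[where f=card] Collect_cong) auto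
  also have "\<dots> = card {z. z < 12 \<and> (\<lambda>s. (perm12 p ^^ s) z) ` hexS \<in> Bset}"
  proof (rule arg_cong[where f=card], rule Collect_cong)
    fix z
    show "(z < 12 \<and> inhex (sort (remdups (transpose Ls ! z)))) =
          (z < 12 \<and> (\<lambda>s. (perm12 p ^^ s) z) ` hexS \<in> Bset)"
    proof (cases "z < 12")
      case True
      have "(\<lambda>s. (perm12 p ^^ s) z) ` hexS = set (map (\<lambda>L. L ! z) Ls)"
        unfolding hexS_def Ls_def using pow_perm12[OF p] True lpow_valid[OF p]
        by (simp add: perm12_def)
      then show ?thesis using True tz[OF True] hex_mem[of "map (\<lambda>L. L ! z) Ls"]
        by (simp add: Bset_def inhex_def)
    qed simp
  qed
  finally show ?thesis by simp
qed

lemma upt_1_12: "[1..<12] = [1,2,3,4,5,6,7,8,9,10,11::nat]" by code_simp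

lemma Jinv_perm12: assumes p: "valid p" shows "Jinv (perm12 p) = Jl p"
proof -
  have f: "fixc (perm12 p) k = fixcnt (lpow p k)" for k
    unfolding fixc_def pow_perm12[OF p] using fixcnt_card[OF lpow_valid[OF p]] .
  have h: "hexc (perm12 p) = hexcnt p" unfolding hexc_def using hexcnt_card[OF p] .
  show ?thesis unfolding Jinv_def Jl_def upt_1_12 by (simp add: f h)
qed

definition reps :: "(nat \<Rightarrow> nat) list" where "reps = [id, (m12_gen1 \<circ> id), (m12_gen2 \<circ> id), (m12_gen3 \<circ> id), (m12_gen1 \<circ> (m12_gen1 \<circ> id)), (m12_gen3 \<circ> (m12_gen1 \<circ> id)), (m12_gen2 \<circ> (m12_gen2 \<circ> id)), (m12_gen3 \<circ> (m12_gen2 \<circ> id)), (m12_gen2 \<circ> (m12_gen1 \<circ> (m12_gen1 \<circ> id))), (m12_gen2 \<circ> (m12_gen2 \<circ> (m12_gen1 \<circ> id))), (m12_gen3 \<circ> (m12_gen2 \<circ> (m12_gen1 \<circ> id))), (m12_gen3 \<circ> (m12_gen2 \<circ> (m12_gen2 \<circ> id))), (m12_gen2 \<circ> (m12_gen1 \<circ> (m12_gen1 \<circ> (m12_gen1 \<circ> id)))), (m12_gen2 \<circ> (m12_gen3 \<circ> (m12_gen2 \<circ> (m12_gen1 \<circ> (m12_gen1 \<circ> id))))), (m12_gen3 \<circ> (m12_gen1 \<circ> (m12_gen1 \<circ> (m12_gen1 \<circ> (m12_gen1 \<circ> (m12_gen1 \<circ> id))))))]"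

definition Ps :: "nat list list" where "Ps = [[0,1,2,3,4,5,6,7,8,9,10,11], [1,2,3,4,5,6,7,8,9,10,0,11], [0,1,6,9,5,3,10,2,8,4,7,11], [11,10,5,7,8,2,9,3,4,6,1,0], [2,3,4,5,6,7,8,9,10,0,1,11], [10,5,7,8,2,9,3,4,6,1,11,0], [0,1,10,4,3,9,7,6,8,5,2,11], [11,10,9,6,2,7,1,5,4,8,3,0], [6,9,5,3,10,2,8,4,7,0,1,11], [1,10,4,3,9,7,6,8,5,2,0,11], [10,9,6,2,7,1,5,4,8,3,11,0], [11,10,1,8,7,6,3,9,4,2,5,0], [9,5,3,10,2,8,4,7,0,1,6,11], [4,10,6,2,1,3,5,8,9,11,7,0], [2,9,3,4,6,1,11,10,5,7,8,0]]"

lemma Ps_valid: "\<forall>p\<in>set Ps. valid p" unfolding Ps_def valid_def by code_simp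

lemma Jl_distinct: "distinct (map Jl Ps)" unfolding Ps_def by code_simp

lemma v12: "valid [a0,a1,a2,a3,a4,a5,a6,a7,a8,a9,a10,a11] \<longleftrightarrow>
   a0 < 12 \<and> a1 < 12 \<and> a2 < 12 \<and> a3 < 12 \<and> a4 < 12 \<and> a5 < 12 \<and> a6 < 12 \<and> a7 < 12 \<and>
   a8 < 12 \<and> a9 < 12 \<and> a10 < 12 \<and> a11 < 12"
  by (simp add: valid_def)

lemma id_perm12: "id = perm12 [0,1,2,3,4,5,6,7,8,9,10,11]"
  by (auto simp: perm12_def fun_eq_iff less_Suc_eq numeral_eq_Suc)

lemma reps_eq: "reps = map perm12 Ps"
  unfolding reps_def Ps_def id_perm12 m12_gen1_def m12_gen2_def m12_gen3_def
  by (simp add: perm12_comp v12)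

lemma reps_distinct: "distinct (map Jinv reps)"
proof -
  have "map Jinv reps = map Jl Ps"
    unfolding reps_eq map_map using Ps_valid Jinv_perm12 by (simp add: comp_def)
  then show ?thesis using Jl_distinct by simp
qed

lemma gen1_in: "m12_gen1 \<in> M12" using M12_g1[OF M12_id] by simp
lemma gen2_in: "m12_gen2 \<in> M12" using M12_g2[OF M12_id] by simp
lemma gen3_in: "m12_gen3 \<in> M12" using M12_g3[OF M12_id] by simp

lemma reps_M12: "\<forall>f\<in>set reps. f \<in> M12"
  unfolding reps_def by (simp add: M12_id M12_g1 M12_g2 M12_g3 gen1_in gen2_in gen3_in)

lemma length_reps: "length reps = 15" unfolding reps_def by simp




definition Tset :: "nat \<Rightarrow> nat list set" where
  "Tset r = {xs. set xs \<subseteq> {..<15} \<and> length xs = r}"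
definition Eel :: "nat \<Rightarrow> nat list \<Rightarrow> (nat \<Rightarrow> nat) \<Rightarrow> (nat \<Rightarrow> nat)" where
  "Eel r xs = wr_elem r (\<lambda>i. reps ! (xs ! i)) 0"

lemma reps_in: assumes "j < 15" shows "reps ! j \<in> M12"
proof -
  have "reps ! j \<in> set reps" using assms length_reps by (intro nth_mem) simp
  then show ?thesis using reps_M12 by blast
qed

lemma reps_good: "j < 15 \<Longrightarrow> good (reps ! j)"
  using reps_in M12_good by blast

lemma Tset_nth: assumes "xs \<in> Tset r" "i < r" shows "xs ! i < 15"
proof -
  have "xs ! i \<in> set xs" using assms unfolding Tset_def by (intro nth_mem) simp
  then show ?thesis using assms unfolding Tset_def by blast
qed

lemma Eel_in: assumes "r \<ge> 1" "xs \<in> Tset r" shows "Eel r xs \<in> M12_wr r"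
proof -
  have a: "\<forall>i<r. reps ! (xs ! i) \<in> M12" using Tset_nth[OF assms(2)] reps_in by blast
  have "0 < r" using assms(1) by simp
  then show ?thesis unfolding M12_wr_def Eel_def using a by blast
qed

lemma id_wr: assumes "r \<ge> 1" shows "id \<in> M12_wr r"
proof -
  have "wr_elem r (\<lambda>_. id) 0 = id"
  proof
    fix x show "wr_elem r (\<lambda>_. id) 0 x = id x"
      by (auto simp: wr_elem_def prod_dom_def fun_eq_iff)
  qed
  moreover have "0 < r" using assms by simp
  moreover have "\<forall>i<r. (\<lambda>_. id) i \<in> M12" using M12_id by simp
  ultimately have "\<exists>a s. id = wr_elem r a s \<and> s < r \<and> (\<forall>i<r. a i \<in> M12)"
    by (intro exI[where x="\<lambda>_. id"] exI[where x=0]) simp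
  then show ?thesis unfolding M12_wr_def by simp
qed

lemma wr_elem_in_dom:
  assumes "\<forall>i<r. good (a i)" "x \<in> prod_dom r"
  shows "wr_elem r a s x \<in> prod_dom r"
proof -
  have "a i (x ((i + s) mod r)) < 12" if "i < r" for i
  proof -
    have "(i + s) mod r < r" using that by simp
    then have "x ((i + s) mod r) < 12" using assms(2) unfolding prod_dom_def by blast
    then show ?thesis using good_lt assms(1) that by blast
  qed
  then show ?thesis using assms(2) unfolding wr_elem_def prod_dom_def by auto
qed

lemma wr_elem_app:
  "x \<in> prod_dom r \<Longrightarrow> wr_elem r a s x = (\<lambda>i. if i < r then a i (x ((i + s) mod r)) else 0)"
  unfolding wr_elem_def by simp

lemma key:
  assumes r: "r \<ge> 1" and xs: "xs \<in> Tset r" and ys: "ys \<in> Tset r"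
    and gG: "g \<in> M12_wr r" and c: "Eel r ys \<circ> g = g \<circ> Eel r xs"
  shows "\<exists>s<r. ys = rotate s xs"
proof -
  obtain b s where g: "g = wr_elem r b s" and s: "s < r" and bM: "\<forall>i<r. b i \<in> M12"
    using gG unfolding M12_wr_def by blast
  have bg: "\<forall>i<r. good (b i)" using bM M12_good by blast
  define A where "A i = reps ! (ys ! i)" for i
  define C where "C i = reps ! (xs ! i)" for i
  have Ag: "\<forall>i<r. good (A i)" unfolding A_def using Tset_nth[OF ys] reps_good by blast
  have Cg: "\<forall>i<r. good (C i)" unfolding C_def using Tset_nth[OF xs] reps_good by blast
  have EA: "Eel r ys = wr_elem r A 0" unfolding Eel_def A_def ..
  have EC: "Eel r xs = wr_elem r C 0" unfolding Eel_def C_def ..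
  have comp: "A i \<circ> b i = b i \<circ> C ((i + s) mod r)" if i: "i < r" for i
  proof
    fix d
    define j where "j = (i + s) mod r"
    have j: "j < r" unfolding j_def using i by simp
    show "(A i \<circ> b i) d = (b i \<circ> C ((i + s) mod r)) d"
    proof (cases "d < 12")
      case False
      then show ?thesis using Ag bg Cg i j unfolding j_def[symmetric]
        by (simp add: good_fix)
    next
      case True
      define z where "z = (\<lambda>k. if k = j then d else (0::nat))"
      have z: "z \<in> prod_dom r" unfolding z_def prod_dom_def using True j by auto
      have gz: "g z \<in> prod_dom r" unfolding g using wr_elem_in_dom[OF bg z] .
      have cz: "Eel r xs z \<in> prod_dom r" unfolding EC using wr_elem_in_dom[OF Cg z] .
      have "(Eel r ys \<circ> g) z i = (g \<circ> Eel r xs) z i" using c by simp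
      moreover have "(Eel r ys \<circ> g) z i = A i (b i d)"
        using gz z i by (simp add: EA g wr_elem_app j_def[symmetric] z_def)
      moreover have "(g \<circ> Eel r xs) z i = b i (C j d)"
        using cz z i j by (simp add: EC g wr_elem_app j_def[symmetric] z_def)
      ultimately show ?thesis unfolding j_def by simp
    qed
  qed
  have eq: "ys ! i = xs ! ((i + s) mod r)" if i: "i < r" for i
  proof -
    have "Jinv (A i) = Jinv (C ((i + s) mod r))"
      using Jinv_conj[OF _ comp[OF i]] bg i by blast
    then have "map Jinv reps ! (ys ! i) = map Jinv reps ! (xs ! ((i + s) mod r))"
      unfolding A_def C_def using Tset_nth[OF ys i] Tset_nth[OF xs, of "(i + s) mod r"] i
      by (simp add: length_reps)
    then show ?thesis
      using reps_distinct nth_eq_iff_index_eq Tset_nth[OF ys i] Tset_nth[OF xs, of "(i + s) mod r"] i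
      by (metis length_map length_reps mod_less_divisor order_less_le_trans zero_less_one r)
  qed
  have lx: "length xs = r" "length ys = r" using xs ys unfolding Tset_def by auto
  have "ys = rotate s xs"
    by (rule nth_equalityI) (auto simp: lx nth_rotate eq add.commute)
  with s show ?thesis by blast
qed

lemma finite_prod_dom: "finite (prod_dom r)"
proof -
  define F :: "nat list \<Rightarrow> nat \<Rightarrow> nat" where "F xs = (\<lambda>i. if i < r then xs ! i else 0)" for xs
  define L where "L = {xs. set xs \<subseteq> {..<(12::nat)} \<and> length xs = r}"
  have "prod_dom r \<subseteq> F ` L"
  proof
    fix x assume x: "x \<in> prod_dom r"
    have e: "x = F (map x [0..<r])"
    proof (rule ext)
      fix i show "x i = F (map x [0..<r]) i"
        using x unfolding prod_dom_def F_def by simp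
    qed
    have m: "map x [0..<r] \<in> L"
      using x unfolding prod_dom_def L_def by auto
    show "x \<in> F ` L" using image_eqI[where f=F, OF e m] .
  qed
  moreover have "finite L" unfolding L_def
    by (rule finite_lists_length_eq) simp
  ultimately show ?thesis using finite_subset finite_imageI by blast
qed

lemma finite_selfmaps:
  assumes "finite D"
  shows "finite {f :: 'a \<Rightarrow> 'a. (\<forall>x. x \<notin> D \<longrightarrow> f x = x) \<and> (\<forall>x\<in>D. f x \<in> D)}"
proof -
  define S where "S = {g :: 'a \<Rightarrow> 'a. \<forall>x. (x \<in> D \<longrightarrow> g x \<in> D) \<and> (x \<notin> D \<longrightarrow> g x = undefined)}"
  have "{f. (\<forall>x. x \<notin> D \<longrightarrow> f x = x) \<and> (\<forall>x\<in>D. f x \<in> D)}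
      \<subseteq> (\<lambda>g x. if x \<in> D then g x else x) ` S"
  proof
    fix f assume f: "f \<in> {f. (\<forall>x. x \<notin> D \<longrightarrow> f x = x) \<and> (\<forall>x\<in>D. f x \<in> D)}"
    define g where "g x = (if x \<in> D then f x else undefined)" for x
    have "f = (\<lambda>x. if x \<in> D then g x else x)"
    proof (rule ext)
      fix x show "f x = (if x \<in> D then g x else x)" using f by (simp add: g_def)
    qed
    moreover have "g \<in> S" using f by (auto simp: S_def g_def)
    ultimately show "f \<in> (\<lambda>g x. if x \<in> D then g x else x) ` S" by blast
  qed
  moreover have "finite S" unfolding S_def using finite_set_of_finite_funs[OF assms assms] .
  ultimately show ?thesis using finite_subset by blast
qed

lemma finite_wr: "finite (M12_wr r)"
proof -
  have "M12_wr r \<subseteq> {f. (\<forall>x. x \<notin> prod_dom r \<longrightarrow> f x = x) \<and> (\<forall>x\<in>prod_dom r. f x \<in> prod_dom r)}"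
  proof
    fix f assume "f \<in> M12_wr r"
    then obtain a s where f: "f = wr_elem r a s" and a: "\<forall>i<r. a i \<in> M12"
      unfolding M12_wr_def by blast
    have "\<forall>i<r. good (a i)" using a M12_good by blast
    then show "f \<in> {f. (\<forall>x. x \<notin> prod_dom r \<longrightarrow> f x = x) \<and> (\<forall>x\<in>prod_dom r. f x \<in> prod_dom r)}"
      unfolding f using wr_elem_in_dom by (auto simp: wr_elem_def)
  qed
  then show ?thesis using finite_selfmaps[OF finite_prod_dom] finite_subset by blast
qed

lemma count_classes:
  assumes r: "r \<ge> 1"
  shows "15 ^ r \<le> r * num_conj_classes (M12_wr r)"
proof -
  define G where "G = M12_wr r"
  define cl where "cl x = {h \<in> G. \<exists>g\<in>G. h \<circ> g = g \<circ> x}" for x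
  define F where "F xs = cl (Eel r xs)" for xs
  define T where "T = Tset r"
  have idG: "id \<in> G" unfolding G_def using id_wr[OF r] .
  have EG: "xs \<in> T \<Longrightarrow> Eel r xs \<in> G" for xs unfolding G_def T_def using Eel_in[OF r] by blast
  have fT: "finite T" unfolding T_def Tset_def
    by (rule finite_lists_length_eq) simp
  have cT: "card T = 15 ^ r" unfolding T_def Tset_def
    using card_lists_length_eq[of "{..<(15::nat)}" r] by simp
  have fib: "card {ys \<in> T. F ys = c} \<le> r" if "c \<in> F ` T" for c
  proof -
    obtain x0 where x0: "x0 \<in> T" "c = F x0" using \<open>c \<in> F ` T\<close> by blast
    have "{ys \<in> T. F ys = c} \<subseteq> (\<lambda>s. rotate s x0) ` {..<r}"
    proof
      fix ys assume "ys \<in> {ys \<in> T. F ys = c}"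
      then have ys: "ys \<in> T" "F ys = F x0" using x0 by auto
      have "Eel r ys \<in> F ys" unfolding F_def cl_def using EG[OF ys(1)] idG by force
      then have "Eel r ys \<in> F x0" using ys by simp
      then obtain g where "g \<in> G" "Eel r ys \<circ> g = g \<circ> Eel r x0"
        unfolding F_def cl_def by blast
      then obtain s where "s < r" "ys = rotate s x0"
        using key[OF r _ _ _] x0(1) ys(1) unfolding T_def G_def by blast
      then show "ys \<in> (\<lambda>s. rotate s x0) ` {..<r}" by blast
    qed
    then have "card {ys \<in> T. F ys = c} \<le> card ((\<lambda>s. rotate s x0) ` {..<r})"
      by (rule card_mono[rotated]) simp
    also have "\<dots> \<le> card {..<r}" by (rule card_image_le) simp
    finally show ?thesis by simp
  qed
  have "T = (\<Union>c\<in>F ` T. {ys \<in> T. F ys = c})" by blast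
  then have "card T \<le> (\<Sum>c\<in>F ` T. card {ys \<in> T. F ys = c})"
    using card_UN_le[of "F ` T" "\<lambda>c. {ys \<in> T. F ys = c}"] fT by simp
  also have "\<dots> \<le> (\<Sum>c\<in>F ` T. r)" by (rule sum_mono) (rule fib)
  also have "\<dots> = card (F ` T) * r" by simp
  also have "card (F ` T) \<le> card (cl ` G)"
  proof (rule card_mono)
    show "finite (cl ` G)" unfolding G_def using finite_wr by simp
    show "F ` T \<subseteq> cl ` G" unfolding F_def using EG by blast
  qed
  then have "card (F ` T) * r \<le> card (cl ` G) * r" by simp
  finally show ?thesis unfolding cT num_conj_classes_def G_def cl_def by (simp add: mult.commute)
qed



lemma c_lt_15: "(12::real) powr 1.08 < 15"
proof (rule ccontr)
  assume "\<not> (12::real) powr 1.08 < 15"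
  then have "(15::real) \<le> 12 powr 1.08" by simp
  have "(15::real) powr 100 \<le> (12 powr 1.08) powr 100"
    by (rule powr_mono2) (use \<open>(15::real) \<le> 12 powr 1.08\<close> in auto)
  also have "\<dots> = 12 powr (1.08 * 100)" by (simp add: powr_powr)
  also have "\<dots> = 12 powr 108" by simp
  finally have "(15::real) powr (real 100) \<le> 12 powr (real 108)" by simp
  then have "(15::real) ^ 100 \<le> 12 ^ 108" by (simp only: powr_realpow zero_less_numeral)
  then show False by simp
qed

lemma asym: "\<exists>R. \<forall>r\<ge>R. real r * ((12::real) powr 1.08) ^ r < 15 ^ r"
proof -
  define c where "c = (12::real) powr 1.08"
  have c0: "c > 0" unfolding c_def by simp
  have c15: "c < 15" unfolding c_def by (rule c_lt_15)
  define q where "q = 15 / c"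
  have q1: "1 < norm q" unfolding q_def using c0 c15 by simp
  have "((\<lambda>n. of_nat n / q ^ n) \<longlongrightarrow> 0) sequentially"
    by (rule lim_n_over_pown[OF q1])
  then have "eventually (\<lambda>n. norm (of_nat n / q ^ n) < 1) sequentially"
    using order_tendstoD(2)[of "\<lambda>n. norm (of_nat n / q ^ n)" 0 sequentially 1]
      tendsto_norm_zero by fastforce
  then obtain R where R: "\<And>n. n \<ge> R \<Longrightarrow> norm (of_nat n / q ^ n) < 1"
    by (auto simp: eventually_sequentially)
  have "real r * c ^ r < 15 ^ r" if "r \<ge> R" for r
  proof -
    have qp: "q ^ r > 0" unfolding q_def using c0 by simp
    have "real r / q ^ r < 1" using R[OF that] qp by simp
    then have "real r < q ^ r" using qp by (simp add: field_simps)
    also have "q ^ r = 15 ^ r / c ^ r" unfolding q_def by (simp add: power_divide)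
    finally show ?thesis using c0 by (simp add: field_simps)
  qed
  then show ?thesis unfolding c_def by blast
qed


theorem lemma4p1:
  shows "\<exists>R. \<forall>r\<ge>R. r \<ge> 1 \<longrightarrow>
           real (num_conj_classes (M12_wr r)) > (real (12 ^ r)) powr 1.08"
proof -
  obtain R where R: "\<And>r. r \<ge> R \<Longrightarrow> real r * ((12::real) powr 1.08) ^ r < 15 ^ r"
    using asym by blast
  have "r \<ge> 1 \<longrightarrow> real (num_conj_classes (M12_wr r)) > (real (12 ^ r)) powr 1.08"
    if rR: "r \<ge> R" for r
  proof
    assume r1: "r \<ge> 1"
    define k where "k = num_conj_classes (M12_wr r)"
    have "15 ^ r \<le> r * k" unfolding k_def using count_classes[OF r1] .
    then have le: "(15::real) ^ r \<le> real r * real k"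
      by (metis of_nat_le_iff of_nat_mult of_nat_numeral of_nat_power)
    have e: "(real (12 ^ r)) powr 1.08 = ((12::real) powr 1.08) ^ r"
    proof -
      have "(real (12 ^ r)) powr 1.08 = ((12::real) powr real r) powr 1.08"
        by (simp add: powr_realpow)
      also have "\<dots> = ((12::real) powr 1.08) powr real r" by (simp add: powr_powr mult.commute)
      also have "\<dots> = ((12::real) powr 1.08) ^ r" by (simp add: powr_realpow)
      finally show ?thesis .
    qed
    have "real r * ((12::real) powr 1.08) ^ r < real r * real k"
      using R[OF rR] le by linarith
    then have "((12::real) powr 1.08) ^ r < real k" using r1
      by (metis mult_less_cancel_left_pos of_nat_0_less_iff less_le_trans zero_less_one)
    then show "real (num_conj_classes (M12_wr r)) > (real (12 ^ r)) powr 1.08"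
      unfolding k_def e .
  qed
  then show ?thesis by blast
qed


end
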